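(* The Schur complement can be reexpressed as \[ S_N^{\omega}(\alpha,\beta,\lambda)=\phi(\alpha,\beta,\lambda)\big(\mathcal{L}_{N-1}^{\Omega}-R(\alpha,\beta,\lambda)\big)\qquad (\lambda\in \mathbb{R}), \] where $\mathcal{L}^\Omega_{N-1}$ is the magnetic Laplacian on $V_{N-1}$ with $U(1)$ connection $\Omega$, a self-adjoint operator on $L^2(V_{N-1}, \deg_{G_{N-1}})$, and $R(\alpha,\beta,\lambda)$ is the spectral decimation function. Specifically: (Case 1) If $\mathbb{R}\ni\lambda\mapsto \Psi(\alpha,\beta,\lambda)$ is $\mathbb{R}$-valued, then \[ \phi(\alpha,\beta,\lambda)=\frac{\Psi(\alpha,\beta,\lambda)}{4\mathcal{D}(\beta,\lambda)},\quad R(\alpha,\beta,\lambda)=1+\frac{A(\alpha,\beta,\lambda)-64\mathcal{D}(\beta,\lambda)(1-\lambda)}{16\Psi(\alpha,\beta,\lambda)},\quad \Omega_{ab}(\alpha,\beta)=\omega_{ac}\omega_{cb}. \] (Case 2) If $\mathbb{R}\ni\lambda\mapsto \Psi(\alpha,\beta,\lambda)$ is $\mathbb{C}$-valued, then \[ \phi(\alpha,\beta,\lambda)=\frac{|\Psi(\alpha,\beta,\lambda)|}{4\mathcal{D}(\beta,\lambda)},\quad R(\alpha,\beta,\lambda)=1+\frac{A(\alpha,\beta,\lambda)-64\mathcal{D}(\beta,\lambda)(1-\lambda)}{16|\Psi(\alpha,\beta,\lambda)|}, \] \[ \theta(\alpha,\beta,\lambda)=\frac{\arg \Psi(\alpha,\beta,\lambda)}{2\pi}\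 (\arg:\mathbb{C}\to[0,2\pi)),\quad \Omega_{ab}(\alpha,\beta,\lambda)=\omega_{ac}\omega_{cb}e^{2\pi i\theta(\alpha,\beta,\lambda)}. \] In both cases, $a\sim c\sim b$ (with $c\in V_N\setminus V_{N-1}$ the midpoint of $a,b$), and the upright cell to which the edge $ab$ belongs is traversed counterclockwise.
   Context: Let $G_N=(V_N,E_N)$ be the level-$N$ Sierpinski gasket graph, $V_0$ its three corners, $V_{N-1}\subset V_N$ the vertices of the nested level-$(N-1)$ graph. Let $\omega$ be a $U(1)$ connection on $G_N$ with magnetic flux $\alpha$ through every upright unit triangle and $\beta$ through every downright unit triangle. The magnetic Laplacian $\mathcal{L}^\omega_N$ has entries $1$ on the diagonal, $-\tfrac12\omega_{xy}$ if $x\in V_0$, $y\sim x$, $-\tfrac14\omega_{xy}$ if $x\in V_N\setminus V_0$, $y\sim x$, and $0$ otherwise; for a general connection $\Omega$ on $G_{N-1}$, $\mathcal{L}^\Omega_{N-1}$ is defined analogously on $G_{N-1}$. Writing $\mathcal{L}^\omega_N-\lambda I=\begin{bmatrix}A-\lambda I & B\\ C & D-\lambda I\end{bmatrix}$ with respect to $V_N=V_{N-1}\sqcup(V_N\setminus V_{N-1})$, the Schur complement is $S_N^{\omega}(\alpha,\beta,\lambda)=(A-\lambda I)-B(D-\lambda I)^{-1}C$. The functions are $A(\alpha,\beta,\lambda)=16\lambda^2-(32+4\cos(2\pi\alpha))\lambda+15+4\cos(2\pi\alpha)+\cos(2\pi(\alpha+\beta))$, $\mathcal{D}(\beta,\lambda)=-\lambda^3+3\lambda^2-\tfrac{45}{16}\lambda+\tfrac{13}{16}-\tfrac{1}{32}\cos(2\pi\beta)$,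 $\Psi(\alpha,\beta,\lambda)=(1-\lambda)^2-\tfrac{1}{16}+\tfrac{1-\lambda}{4}(2e^{-2\pi i\alpha}+e^{-2\pi i(2\alpha+\beta)})+\tfrac{1}{16}(e^{-4\pi i \alpha}+2e^{-2\pi i (\alpha+\beta)})$. The identity holds for real $\lambda$ where the expressions are defined (e.g. $\mathcal{D}(\beta,\lambda)\neq0$, $\Psi(\alpha,\beta,\lambda)\neq 0$). *)

theory Defs
  imports "HOL-Analysis.Analysis"
begin

text \<open>Vertices of G_N are lattice points (i,j) (position i*e1 + j*e2 with e1 = (1,0),
  e2 = (1/2, sqrt 3/2)), the whole gasket having side length 2^N.
  An upright unit cell is given by its lower-left corner p; its vertices are
  p, p+e1, p+e2, and p -> p+e1 -> p+e2 -> p is counterclockwise.\<close>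

type_synonym vtx = "nat \<times> nat"
type_synonym conn = "vtx \<Rightarrow> vtx \<Rightarrow> complex"

fun SG_cells :: "nat \<Rightarrow> vtx set" where
  "SG_cells 0 = {(0,0)}"
| "SG_cells (Suc n) = SG_cells n \<union> (\<lambda>(i,j). (i + 2^n, j)) ` SG_cells n
                        \<union> (\<lambda>(i,j). (i, j + 2^n)) ` SG_cells n"

definition cell_vertices :: "vtx \<Rightarrow> vtx set" where
  "cell_vertices p = {p, (fst p + 1, snd p), (fst p, snd p + 1)}"

definition SG_V :: "nat \<Rightarrow> vtx set" where
  "SG_V n = (\<Union>p\<in>SG_cells n. cell_vertices p)"

definition SG_adj :: "nat \<Rightarrow> vtx \<Rightarrow> vtx \<Rightarrow> bool" where
  "SG_adj n x y \<longleftrightarrow> x \<noteq> y \<and> (\<exists>p\<in>SG_cells n. x \<in> cell_vertices p \<and> y \<in> cell_vertices p)"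

definition SG_V0 :: "nat \<Rightarrow> vtx set" where
  "SG_V0 n = {(0,0), (2^n, 0), (0, 2^n)}"

text \<open>Embedding of G_{N-1} into G_N: V_{N-1} sits inside V_N as the points with even coordinates.\<close>
definition emb :: "vtx \<Rightarrow> vtx" where
  "emb a = (2 * fst a, 2 * snd a)"

definition SG_Vold :: "nat \<Rightarrow> vtx set" where
  "SG_Vold N = emb ` SG_V (N - 1)"

definition U1_connection :: "nat \<Rightarrow> conn \<Rightarrow> bool" where
  "U1_connection n \<omega> \<longleftrightarrow>
     (\<forall>x y. SG_adj n x y \<longrightarrow> cmod (\<omega> x y) = 1 \<and> \<omega> y x = inverse (\<omega> x y))"

definition up_holonomy :: "conn \<Rightarrow> vtx \<Rightarrow> complex" where
  "up_holonomy \<omega> p = (let x = p; y = (fst p + 1, snd p); z = (fst p, snd p + 1)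
                       in \<omega> x y * \<omega> y z * \<omega> z x)"

definition is_down_triangle :: "nat \<Rightarrow> vtx \<Rightarrow> bool" where
  "is_down_triangle n q \<longleftrightarrow>
     (let x = (fst q + 1, snd q); y = (fst q + 1, snd q + 1); z = (fst q, snd q + 1)
      in SG_adj n x y \<and> SG_adj n y z \<and> SG_adj n z x)"

definition down_holonomy :: "conn \<Rightarrow> vtx \<Rightarrow> complex" where
  "down_holonomy \<omega> q = (let x = (fst q + 1, snd q); y = (fst q + 1, snd q + 1); z = (fst q, snd q + 1)
                         in \<omega> x y * \<omega> y z * \<omega> z x)"

definition mag_lap :: "nat \<Rightarrow> conn \<Rightarrow> vtx \<Rightarrow> vtx \<Rightarrow> complex" where
  "mag_lap n \<omega> x y =
     (if x = y then 1
      else if SG_adj n x y then (if x \<in> SG_V0 n then - (1/2) * \<omega> x y else - (1/4) * \<omega> x y)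
      else 0)"

definition inverse_on :: "'a set \<Rightarrow> ('a \<Rightarrow> 'a \<Rightarrow> complex) \<Rightarrow> ('a \<Rightarrow> 'a \<Rightarrow> complex) \<Rightarrow> bool" where
  "inverse_on S M M' \<longleftrightarrow>
     (\<forall>x\<in>S. \<forall>y\<in>S. (\<Sum>z\<in>S. M x z * M' z y) = (if x = y then 1 else 0)
                 \<and> (\<Sum>z\<in>S. M' x z * M z y) = (if x = y then 1 else 0))"

definition mat_inv_on :: "'a set \<Rightarrow> ('a \<Rightarrow> 'a \<Rightarrow> complex) \<Rightarrow> ('a \<Rightarrow> 'a \<Rightarrow> complex)" where
  "mat_inv_on S M = (SOME M'. inverse_on S M M')"

text \<open>S_N = (A - lam I) - B (D - lam I)^{-1} C, blocks w.r.t. V_N = V_{N-1} \<union> (V_N - V_{N-1});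
  its entries are indexed by V_{N-1} (inside V_N).\<close>
definition schur_compl :: "nat \<Rightarrow> conn \<Rightarrow> real \<Rightarrow> vtx \<Rightarrow> vtx \<Rightarrow> complex" where
  "schur_compl N \<omega> lam x y =
     (let M = (\<lambda>u v. mag_lap N \<omega> u v - (if u = v then complex_of_real lam else 0));
          I = SG_V N - SG_Vold N;
          Dinv = mat_inv_on I M
      in M x y - (\<Sum>z\<in>I. \<Sum>w\<in>I. M x z * Dinv z w * M w y))"

definition A_fun :: "real \<Rightarrow> real \<Rightarrow> real \<Rightarrow> real" where
  "A_fun \<alpha> \<beta> lam = 16 * lam^2 - (32 + 4 * cos (2*pi*\<alpha>)) * lam + 15 + 4 * cos (2*pi*\<alpha>)
                      + cos (2*pi*(\<alpha> + \<beta>))"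

definition D_fun :: "real \<Rightarrow> real \<Rightarrow> real" where
  "D_fun \<beta> lam = - (lam^3) + 3 * lam^2 - (45/16) * lam + 13/16 - (1/32) * cos (2*pi*\<beta>)"

definition Psi_fun :: "real \<Rightarrow> real \<Rightarrow> real \<Rightarrow> complex" where
  "Psi_fun \<alpha> \<beta> lam =
     (1 - of_real lam)^2 - 1/16
     + ((1 - of_real lam) / 4) * (2 * exp (- 2 * of_real pi * \<i> * of_real \<alpha>)
                                 + exp (- 2 * of_real pi * \<i> * of_real (2*\<alpha> + \<beta>)))
     + (1/16) * (exp (- 4 * of_real pi * \<i> * of_real \<alpha>) + 2 * exp (- 2 * of_real pi * \<i> * of_real (\<alpha> + \<beta>)))"

definition arg02 :: "complex \<Rightarrow> real" where
  "arg02 z = (if Arg z < 0 then Arg z + 2 * pi else Arg z)"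

text \<open>a -> b is counterclockwise in the upright cell containing the edge ab
  (edge direction e1, e2 - e1 or -e2).\<close>
definition ccw_edge :: "vtx \<Rightarrow> vtx \<Rightarrow> bool" where
  "ccw_edge a b \<longleftrightarrow>
     (fst b = fst a + 1 \<and> snd b = snd a)
   \<or> (fst a = fst b + 1 \<and> snd b = snd a + 1)
   \<or> (fst b = fst a \<and> snd a = snd b + 1)"

text \<open>Omega_ab = omega_ac omega_cb e^{2 pi i theta} for ab traversed counterclockwise in its cell
  (c = midpoint of a, b in G_N); for the reverse orientation the conjugate phase, so that
  Omega_ba = inverse Omega_ab.\<close>
definition Omega :: "conn \<Rightarrow> real \<Rightarrow> conn" where
  "Omega \<omega> \<theta> a b =
     (let c = (fst a + fst b, snd a + snd b)
      in \<omega> (emb a) c * \<omega> c (emb b) *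
         (if ccw_edge a b then exp (2 * of_real pi * \<i> * of_real \<theta>)
          else exp (- 2 * of_real pi * \<i> * of_real \<theta>)))"

end

theory Submission
  imports Defs
begin

definition chl :: "vtx \<Rightarrow> vtx set" where
  "chl p = {emb p, (2 * fst p+1, 2 * snd p), (2 * fst p, 2 * snd p+1)}"

lemma cells_Suc: "SG_cells (Suc n) = (\<Union>p\<in>SG_cells n. chl p)"
proof (induction n)
  case 0
  show ?case by (auto simp: chl_def emb_def)
next
  case (Suc n)
  have sh1: "(\<lambda>(i,j). (i + 2^Suc n, j)) ` (\<Union>p\<in>S. chl p) = (\<Union>p\<in>(\<lambda>(i,j). (i + 2^n, j)) ` S. chl p)" for S
    by (auto simp: chl_def emb_def image_iff; force)
  have sh2: "(\<lambda>(i,j). (i, j + 2^Suc n)) ` (\<Union>p\<in>S. chl p) = (\<Union>p\<in>(\<lambda>(i,j). (i, j + 2^n)) ` S. chl p)" for S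
    by (auto simp: chl_def emb_def image_iff; force)
  have "SG_cells (Suc (Suc n)) = SG_cells (Suc n) \<union> (\<lambda>(i,j). (i + 2^Suc n, j)) ` SG_cells (Suc n)
                        \<union> (\<lambda>(i,j). (i, j + 2^Suc n)) ` SG_cells (Suc n)" by simp
  also have "\<dots> = (\<Union>p\<in>SG_cells n. chl p) \<union> (\<Union>p\<in>(\<lambda>(i,j). (i + 2^n, j)) ` SG_cells n. chl p)
       \<union> (\<Union>p\<in>(\<lambda>(i,j). (i, j + 2^n)) ` SG_cells n. chl p)"
    by (simp only: Suc sh1 sh2)
  also have "\<dots> = (\<Union>p\<in>SG_cells (Suc n). chl p)" by (simp only: SG_cells.simps(2) UN_Un)
  finally show ?case .
qed

definition Xp :: "vtx \<Rightarrow> vtx" where "Xp p = (2 * fst p + 1, 2 * snd p)"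
definition Yp :: "vtx \<Rightarrow> vtx" where "Yp p = (2 * fst p + 1, 2 * snd p + 1)"
definition Zp :: "vtx \<Rightarrow> vtx" where "Zp p = (2 * fst p, 2 * snd p + 1)"
definition P1p :: "vtx \<Rightarrow> vtx" where "P1p p = (2 * fst p + 2, 2 * snd p)"
definition P2p :: "vtx \<Rightarrow> vtx" where "P2p p = (2 * fst p, 2 * snd p + 2)"
definition block :: "vtx \<Rightarrow> vtx set" where "block p = {Xp p, Yp p, Zp p}"
definition six :: "vtx \<Rightarrow> vtx set" where "six p = {emb p, P1p p, P2p p, Xp p, Yp p, Zp p}"
definition half :: "vtx \<Rightarrow> vtx" where "half x = (fst x div 2, snd x div 2)"
definition newpt :: "vtx \<Rightarrow> bool" where "newpt x \<longleftrightarrow> odd (fst x) \<or> odd (snd x)"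
definition unit_diff :: "vtx \<Rightarrow> vtx \<Rightarrow> bool" where
  "unit_diff x y \<longleftrightarrow>
     (fst y = fst x + 1 \<and> snd y = snd x) \<or> (fst x = fst y + 1 \<and> snd y = snd x)
   \<or> (snd y = snd x + 1 \<and> fst y = fst x) \<or> (snd x = snd y + 1 \<and> fst y = fst x)
   \<or> (fst y = fst x + 1 \<and> snd x = snd y + 1) \<or> (fst x = fst y + 1 \<and> snd y = snd x + 1)"

lemmas pt_defs = Xp_def Yp_def Zp_def P1p_def P2p_def emb_def

lemma chl_eq: "chl p = {emb p, Xp p, Zp p}"
  by (simp add: chl_def pt_defs)

lemma cv_children:
  "cell_vertices (emb p) = {emb p, Xp p, Zp p}"
  "cell_vertices (Xp p) = {Xp p, P1p p, Yp p}"
  "cell_vertices (Zp p) = {Zp p, Yp p, P2p p}"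
  by (auto simp: cell_vertices_def pt_defs)

lemma chl_cv_six: "c \<in> chl p \<Longrightarrow> a \<in> cell_vertices c \<Longrightarrow> a \<in> six p"
  by (auto simp: chl_eq six_def cv_children)

lemma six_split: "six p = emb ` cell_vertices p \<union> block p"
  by (auto simp: six_def block_def cell_vertices_def pt_defs)

lemma block_half: "a \<in> block p \<Longrightarrow> half a = p"
  by (auto simp: block_def half_def pt_defs)

lemma block_new: "a \<in> block p \<Longrightarrow> newpt a"
  by (auto simp: block_def newpt_def pt_defs)

lemma emb_not_new: "\<not> newpt (emb b)"
  by (simp add: newpt_def emb_def)

lemma new_six_block: "newpt a \<Longrightarrow> a \<in> six p \<Longrightarrow> a \<in> block p"
  by (auto simp: six_split emb_not_new)

lemma emb_inj: "emb a = emb b \<longleftrightarrow> a = b"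
  by (auto simp: emb_def prod_eq_iff)

lemma emb_six: "emb b \<in> six p \<longleftrightarrow> b \<in> cell_vertices p"
proof -
  have "emb b \<notin> block p" using block_new emb_not_new by blast
  then show ?thesis by (auto simp: six_split emb_inj)
qed

lemma cv_unit: "x \<in> cell_vertices c \<Longrightarrow> y \<in> cell_vertices c \<Longrightarrow> x \<noteq> y \<Longrightarrow> unit_diff x y"
  by (auto simp: cell_vertices_def unit_diff_def)

lemma adj_unit: "SG_adj n x y \<Longrightarrow> unit_diff x y"
  by (auto simp: SG_adj_def intro: cv_unit)

lemma six_unit: "x \<in> six p \<Longrightarrow> y \<in> six p \<Longrightarrow> unit_diff x y \<Longrightarrow> \<exists>c\<in>chl p. x \<in> cell_vertices c \<and> y \<in> cell_vertices c"
  apply (simp only: six_def insert_iff empty_iff simp_thms)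
  apply (elim disjE)
  apply (simp_all add: unit_diff_def pt_defs cell_vertices_def chl_def)
  done

declare SG_cells.simps(2)[simp del]

lemma finite_cells: "finite (SG_cells n)"
  by (induction n) (auto simp: SG_cells.simps)

lemma adj_char:
  "SG_adj (Suc n) x y \<longleftrightarrow> x \<noteq> y \<and> (\<exists>p\<in>SG_cells n. x \<in> six p \<and> y \<in> six p \<and> unit_diff x y)"
proof
  assume "SG_adj (Suc n) x y"
  then show "x \<noteq> y \<and> (\<exists>p\<in>SG_cells n. x \<in> six p \<and> y \<in> six p \<and> unit_diff x y)"
    using adj_unit[of "Suc n" x y] chl_cv_six unfolding SG_adj_def cells_Suc by blast
next
  assume "x \<noteq> y \<and> (\<exists>p\<in>SG_cells n. x \<in> six p \<and> y \<in> six p \<and> unit_diff x y)"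
  then show "SG_adj (Suc n) x y"
    using six_unit by (fastforce simp: SG_adj_def cells_Suc)
qed

lemma V_Suc: "SG_V (Suc n) = (\<Union>p\<in>SG_cells n. six p)"
proof -
  have "\<Union>(cell_vertices ` chl p) = six p" for p
    by (auto simp: chl_eq cv_children six_def)
  then show ?thesis unfolding SG_V_def cells_Suc UN_UN_flatten by simp
qed

lemma Vold_Suc: "SG_Vold (Suc n) = (\<Union>p\<in>SG_cells n. emb ` cell_vertices p)"
  by (simp add: SG_Vold_def SG_V_def image_UN)

lemma I_Suc: "SG_V (Suc n) - SG_Vold (Suc n) = (\<Union>p\<in>SG_cells n. block p)"
  unfolding V_Suc Vold_Suc six_split
  using block_new emb_not_new by fastforce

lemma chl_emb_cv: "c \<in> chl p \<Longrightarrow> emb b \<in> cell_vertices c \<longleftrightarrow> (b \<in> cell_vertices p \<and> c = (fst p + fst b, snd p + snd b))"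
  by (cases p; cases b; auto simp: chl_def cell_vertices_def emb_def; presburger)

lemma V0_new: "Suc 0 \<le> n \<Longrightarrow> a \<in> SG_V0 n \<Longrightarrow> \<not> newpt a"
  by (cases n) (auto simp: SG_V0_def newpt_def)

lemma emb_V0: "emb b \<in> SG_V0 (Suc n) \<longleftrightarrow> b \<in> SG_V0 n"
  by (auto simp: SG_V0_def emb_def prod_eq_iff)

lemma not_new_emb: "\<not> newpt a \<Longrightarrow> a = emb (half a)"
  by (auto simp: newpt_def emb_def half_def prod_eq_iff)

lemma count_cells:
  "a \<in> SG_V n \<Longrightarrow> card {p \<in> SG_cells n. a \<in> cell_vertices p} = (if a \<in> SG_V0 n then 1 else 2)"
proof (induction n arbitrary: a)
  case 0
  then have "a \<in> SG_V0 0" by (auto simp: SG_V_def SG_V0_def cell_vertices_def)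
  moreover have "{p \<in> SG_cells 0. a \<in> cell_vertices p} = {(0,0)}"
    using 0 by (auto simp: SG_V_def)
  ultimately show ?case by simp
next
  case (Suc n)
  from Suc.prems obtain p0 where p0: "p0 \<in> SG_cells n" "a \<in> six p0" by (auto simp: V_Suc)
  show ?case
  proof (cases "newpt a")
    case True
    then have ab: "a \<in> block p0" using p0 new_six_block by blast
    then have hp: "half a = p0" by (rule block_half)
    have S: "{c \<in> SG_cells (Suc n). a \<in> cell_vertices c} = {c \<in> chl p0. a \<in> cell_vertices c}"
    proof safe
      fix c assume "c \<in> SG_cells (Suc n)" "a \<in> cell_vertices c"
      then obtain p where "p \<in> SG_cells n" "c \<in> chl p" by (auto simp: cells_Suc)
      moreover have "a \<in> six p" using chl_cv_six \<open>c \<in> chl p\<close> \<open>a \<in> cell_vertices c\<close> by blast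
      ultimately show "c \<in> chl p0" using True new_six_block block_half hp by metis
    next
      fix c assume "c \<in> chl p0" then show "c \<in> SG_cells (Suc n)" using p0 by (auto simp: cells_Suc)
    qed
    have "{c \<in> chl p0. a \<in> cell_vertices c} = (if a = Xp p0 then {emb p0, Xp p0} else if a = Yp p0 then {Xp p0, Zp p0} else {emb p0, Zp p0})"
      using ab by (auto simp: block_def chl_def cell_vertices_def pt_defs)
    then have "card {c \<in> chl p0. a \<in> cell_vertices c} = 2"
      by (simp add: pt_defs)
    moreover have "a \<notin> SG_V0 (Suc n)" using V0_new[of "Suc n" a] True by auto
    ultimately show ?thesis using S by simp
  next
    case False
    define b where "b = half a"
    have ab: "a = emb b" using False not_new_emb b_def by blast
    have bV: "b \<in> SG_V n" using p0 ab emb_six by (auto simp: SG_V_def)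
    have S: "{c \<in> SG_cells (Suc n). a \<in> cell_vertices c} = (\<lambda>p. (fst p + fst b, snd p + snd b)) ` {p \<in> SG_cells n. b \<in> cell_vertices p}"
    proof safe
      fix c assume "c \<in> SG_cells (Suc n)" "a \<in> cell_vertices c"
      then obtain p where "p \<in> SG_cells n" "c \<in> chl p" by (auto simp: cells_Suc)
      then show "c \<in> (\<lambda>p. (fst p + fst b, snd p + snd b)) ` {p \<in> SG_cells n. b \<in> cell_vertices p}"
        using chl_emb_cv[of c p b] \<open>a \<in> cell_vertices c\<close> ab by auto
    next
      fix p assume "p \<in> SG_cells n" "b \<in> cell_vertices p"
      moreover have "(fst p + fst b, snd p + snd b) \<in> chl p"
        using \<open>b \<in> cell_vertices p\<close> by (auto simp: chl_def cell_vertices_def emb_def)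
      ultimately show "(fst p + fst b, snd p + snd b) \<in> SG_cells (Suc n)"
        "a \<in> cell_vertices (fst p + fst b, snd p + snd b)"
        using chl_emb_cv ab by (auto simp: cells_Suc)
    qed
    have "inj_on (\<lambda>p. (fst p + fst b, snd p + snd b)) X" for X
      by (auto simp: inj_on_def prod_eq_iff)
    then have "card {c \<in> SG_cells (Suc n). a \<in> cell_vertices c} = card {p \<in> SG_cells n. b \<in> cell_vertices p}"
      unfolding S by (rule card_image)
    then show ?thesis using Suc.IH[OF bV] ab emb_V0 by simp
  qed
qed


definition third :: "vtx \<Rightarrow> vtx \<Rightarrow> vtx" where
  "third x y = (let p = half x in if x \<noteq> Xp p \<and> y \<noteq> Xp p then Xp p
                else if x \<noteq> Yp p \<and> y \<noteq> Yp p then Yp p else Zp p)"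

definition Mloc :: "conn \<Rightarrow> complex \<Rightarrow> vtx \<Rightarrow> vtx \<Rightarrow> complex" where
  "Mloc W u x z = (if x = z then u else - (1/4) * W x z)"

definition Kloc :: "conn \<Rightarrow> complex \<Rightarrow> complex \<Rightarrow> vtx \<Rightarrow> vtx \<Rightarrow> complex" where
  "Kloc W u d z y = (if z = y then (u^2 - 1/16) / d
      else (u/4 * W z y + 1/16 * W z (third z y) * W (third z y) y) / d)"

lemma pts_distinct:
  "Xp p \<noteq> Yp p" "Yp p \<noteq> Zp p" "Xp p \<noteq> Zp p" "Yp p \<noteq> Xp p" "Zp p \<noteq> Yp p" "Zp p \<noteq> Xp p"
  by (auto simp: pt_defs)

lemma half_pts [simp]: "half (Xp p) = p" "half (Yp p) = p" "half (Zp p) = p"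
  by (auto simp: pt_defs half_def)

lemma third_simps:
  "third (Xp p) (Yp p) = Zp p" "third (Yp p) (Xp p) = Zp p"
  "third (Yp p) (Zp p) = Xp p" "third (Zp p) (Yp p) = Xp p"
  "third (Xp p) (Zp p) = Yp p" "third (Zp p) (Xp p) = Yp p"
  by (auto simp: third_def pts_distinct Let_def)

lemma ball_block: "(\<forall>x\<in>block p. Q x) \<longleftrightarrow> Q (Xp p) \<and> Q (Yp p) \<and> Q (Zp p)"
  by (auto simp: block_def)

lemma block_inv:
  fixes W :: conn
  assumes inv: "W (Yp p) (Xp p) = inverse (W (Xp p) (Yp p))"
     "W (Zp p) (Yp p) = inverse (W (Yp p) (Zp p))"
     "W (Xp p) (Zp p) = inverse (W (Zp p) (Xp p))"
   and nz: "W (Xp p) (Yp p) \<noteq> 0" "W (Yp p) (Zp p) \<noteq> 0" "W (Zp p) (Xp p) \<noteq> 0"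
   and d: "d = u^3 - 3*u/16 - (h + inverse h)/64" "h = W (Xp p) (Yp p) * W (Yp p) (Zp p) * W (Zp p) (Xp p)"
   and dnz: "d \<noteq> 0"
  shows "\<forall>x\<in>block p. \<forall>y\<in>block p. (\<Sum>z\<in>block p. Mloc W u x z * Kloc W u d z y) = (if x = y then 1 else 0)
          \<and> (\<Sum>z\<in>block p. Kloc W u d x z * Mloc W u z y) = (if x = y then 1 else 0)"
proof -
  define s where "s = W (Xp p) (Yp p)"
  define t where "t = W (Yp p) (Zp p)"
  define r where "r = W (Zp p) (Xp p)"
  note defs = s_def[symmetric] t_def[symmetric] r_def[symmetric]
  have sum3: "(\<Sum>z\<in>block p. f z) = f (Xp p) + f (Yp p) + f (Zp p)" for f :: "vtx \<Rightarrow> complex"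
    by (simp add: block_def pts_distinct)
  have hd: "d = u^3 - 3*u/16 - (s*t*r + inverse (s*t*r))/64" using d defs by simp
  have nz': "s \<noteq> 0" "t \<noteq> 0" "r \<noteq> 0" using nz defs by auto
  have rel: "d * (s*t*r) * 64 = (64*u^3 - 12*u)*(s*t*r) - (s*t*r)^2 - 1"
    unfolding hd using nz' by (simp add: field_simps power2_eq_square)
  show ?thesis
    apply (simp only: ball_block)
    apply (simp add: sum3 Mloc_def Kloc_def pts_distinct third_simps inv defs)
    apply (intro conjI)
    apply (simp_all add: field_simps power2_eq_square nz' dnz)
    apply (insert rel)
    apply algebra+
    done
qed


definition e1p :: "vtx \<Rightarrow> vtx" where "e1p p = (fst p + 1, snd p)"
definition e2p :: "vtx \<Rightarrow> vtx" where "e2p p = (fst p, snd p + 1)"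
definition mid :: "vtx \<Rightarrow> vtx \<Rightarrow> vtx" where "mid a b = (fst a + fst b, snd a + snd b)"

lemma ball_cv: "(\<forall>a\<in>cell_vertices p. Q a) \<longleftrightarrow> Q p \<and> Q (e1p p) \<and> Q (e2p p)"
  by (auto simp: cell_vertices_def e1p_def e2p_def)

lemma loc_simps:
  "emb (e1p p) = P1p p" "emb (e2p p) = P2p p"
  "mid p (e1p p) = Xp p" "mid (e1p p) p = Xp p"
  "mid (e1p p) (e2p p) = Yp p" "mid (e2p p) (e1p p) = Yp p"
  "mid p (e2p p) = Zp p" "mid (e2p p) p = Zp p"
  "ccw_edge p (e1p p)" "\<not> ccw_edge (e1p p) p"
  "ccw_edge (e1p p) (e2p p)" "\<not> ccw_edge (e2p p) (e1p p)"
  "ccw_edge (e2p p) p" "\<not> ccw_edge p (e2p p)"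
  "p \<noteq> e1p p" "e1p p \<noteq> p" "p \<noteq> e2p p" "e2p p \<noteq> p" "e1p p \<noteq> e2p p" "e2p p \<noteq> e1p p"
  by (auto simp: e1p_def e2p_def mid_def pt_defs ccw_edge_def prod_eq_iff)

lemma ud_simps:
  "unit_diff (emb p) (Xp p)" "\<not> unit_diff (emb p) (Yp p)" "unit_diff (emb p) (Zp p)"
  "unit_diff (P1p p) (Xp p)" "unit_diff (P1p p) (Yp p)" "\<not> unit_diff (P1p p) (Zp p)"
  "\<not> unit_diff (P2p p) (Xp p)" "unit_diff (P2p p) (Yp p)" "unit_diff (P2p p) (Zp p)"
  "unit_diff (Xp p) (emb p)" "\<not> unit_diff (Yp p) (emb p)" "unit_diff (Zp p) (emb p)"
  "unit_diff (Xp p) (P1p p)" "unit_diff (Yp p) (P1p p)" "\<not> unit_diff (Zp p) (P1p p)"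
  "\<not> unit_diff (Xp p) (P2p p)" "unit_diff (Yp p) (P2p p)" "unit_diff (Zp p) (P2p p)"
  by (auto simp: unit_diff_def pt_defs)

definition PsiC :: "complex \<Rightarrow> complex \<Rightarrow> complex \<Rightarrow> complex" where
  "PsiC u g h = u^2 - 1/16 + u/4 * (2 * inverse g + inverse (g^2 * h)) + 1/16 * (inverse (g^2) + 2 * inverse (g*h))"

definition QC :: "complex \<Rightarrow> complex \<Rightarrow> complex \<Rightarrow> complex" where
  "QC u g h = 2*(u^2 - 1/16) + u/4 * (g + inverse g) + 1/16 * (g*h + inverse (g*h))"

lemma loc_lemma:
  fixes W :: conn and p :: vtx
  defines "P0 \<equiv> emb p" and "P1 \<equiv> P1p p" and "P2 \<equiv> P2p p" and "X \<equiv> Xp p" and "Y \<equiv> Yp p" and "Z \<equiv> Zp p"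
  assumes inv: "W Y X = inverse (W X Y)" "W Z Y = inverse (W Y Z)" "W X Z = inverse (W Z X)"
     "W X P0 = inverse (W P0 X)" "W P0 Z = inverse (W Z P0)" "W P1 X = inverse (W X P1)"
     "W Y P1 = inverse (W P1 Y)" "W P2 Y = inverse (W Y P2)" "W Z P2 = inverse (W P2 Z)"
   and nz: "W X Y \<noteq> 0" "W Y Z \<noteq> 0" "W Z X \<noteq> 0" "W P0 X \<noteq> 0" "W Z P0 \<noteq> 0" "W X P1 \<noteq> 0"
      "W P1 Y \<noteq> 0" "W Y P2 \<noteq> 0" "W P2 Z \<noteq> 0"
   and hol: "W P0 X * W X Z * W Z P0 = g" "W X P1 * W P1 Y * W Y X = g" "W Z Y * W Y P2 * W P2 Z = g"
      "W X Y * W Y Z * W Z X = h"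
   and dnz: "d \<noteq> 0"
  shows "\<forall>a\<in>cell_vertices p. \<forall>b\<in>cell_vertices p.
     (\<Sum>z\<in>block p. \<Sum>w\<in>block p. (if unit_diff (emb a) z then W (emb a) z else 0) * Kloc W u d z w
          * (if unit_diff w (emb b) then W w (emb b) else 0))
     = (if a = b then QC u g h / d
        else if ccw_edge a b then PsiC u g h / d * W (emb a) (mid a b) * W (mid a b) (emb b)
        else PsiC u (inverse g) (inverse h) / d * W (emb a) (mid a b) * W (mid a b) (emb b))"
proof -
  define s where "s = W X Y"
  define t where "t = W Y Z"
  define r where "r = W Z X"
  define e1 where "e1 = W P0 X"
  define e3 where "e3 = W X P1"
  define e5 where "e5 = W Y P2"
  have nz': "s \<noteq> 0" "t \<noteq> 0" "r \<noteq> 0" "e1 \<noteq> 0" "e3 \<noteq> 0" "e5 \<noteq> 0"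
    using nz by (auto simp: s_def t_def r_def e1_def e3_def e5_def)
  have e2: "W Z P0 = g * r / e1" using hol(1) inv nz unfolding r_def e1_def by (simp add: field_simps)
  have e4: "W P1 Y = g * s / e3" using hol(2) inv nz unfolding s_def e3_def by (simp add: field_simps)
  have e6: "W P2 Z = g * t / e5" using hol(3) inv nz unfolding t_def e5_def by (simp add: field_simps)
  have hh: "h = s * t * r" using hol(4) by (simp add: s_def t_def r_def)
  have gnz: "g \<noteq> 0" using e2 nz nz' by auto
  have sum3: "(\<Sum>z\<in>block p. f z) = f (Xp p) + f (Yp p) + f (Zp p)" for f :: "vtx \<Rightarrow> complex"
    by (simp add: block_def pts_distinct)
  note W = inv e2 e4 e6 s_def[symmetric] t_def[symmetric] r_def[symmetric] e1_def[symmetric]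
    e3_def[symmetric] e5_def[symmetric]
  show ?thesis
    apply (simp only: ball_cv)
    apply (simp add: sum3 loc_simps ud_simps Kloc_def pts_distinct third_simps)
    apply (simp add: P0_def[symmetric] P1_def[symmetric] P2_def[symmetric] X_def[symmetric] Y_def[symmetric] Z_def[symmetric])
    apply (simp add: W)
    apply (intro conjI)
    apply (simp_all add: PsiC_def QC_def hh field_simps nz' gnz dnz power2_eq_square)
    done
qed


lemma adj_in: "p \<in> SG_cells n \<Longrightarrow> x \<in> six p \<Longrightarrow> y \<in> six p \<Longrightarrow> x \<noteq> y \<Longrightarrow> unit_diff x y \<Longrightarrow> SG_adj (Suc n) x y"
  using adj_char by blast

lemma adj_pairs:
  assumes "p \<in> SG_cells n"
  shows "SG_adj (Suc n) (Xp p) (Yp p)" "SG_adj (Suc n) (Yp p) (Zp p)" "SG_adj (Suc n) (Zp p) (Xp p)"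
    "SG_adj (Suc n) (emb p) (Xp p)" "SG_adj (Suc n) (Zp p) (emb p)" "SG_adj (Suc n) (Xp p) (P1p p)"
    "SG_adj (Suc n) (P1p p) (Yp p)" "SG_adj (Suc n) (Yp p) (P2p p)" "SG_adj (Suc n) (P2p p) (Zp p)"
  by (rule adj_in[OF assms]; simp add: six_def unit_diff_def pt_defs)+

lemma hol_simps:
  "up_holonomy \<omega> (emb p) = \<omega> (emb p) (Xp p) * \<omega> (Xp p) (Zp p) * \<omega> (Zp p) (emb p)"
  "up_holonomy \<omega> (Xp p) = \<omega> (Xp p) (P1p p) * \<omega> (P1p p) (Yp p) * \<omega> (Yp p) (Xp p)"
  "up_holonomy \<omega> (Zp p) = \<omega> (Zp p) (Yp p) * \<omega> (Yp p) (P2p p) * \<omega> (P2p p) (Zp p)"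
  "down_holonomy \<omega> (emb p) = \<omega> (Xp p) (Yp p) * \<omega> (Yp p) (Zp p) * \<omega> (Zp p) (Xp p)"
  by (simp_all add: up_holonomy_def down_holonomy_def Let_def pt_defs)

lemma children_cells: "p \<in> SG_cells n \<Longrightarrow> emb p \<in> SG_cells (Suc n) \<and> Xp p \<in> SG_cells (Suc n) \<and> Zp p \<in> SG_cells (Suc n)"
  by (auto simp: cells_Suc chl_eq)

lemma down_tri: "p \<in> SG_cells n \<Longrightarrow> is_down_triangle (Suc n) (emb p)"
  using adj_pairs[of p n]
  by (simp add: is_down_triangle_def Let_def pt_defs)

lemma adj_sym: "SG_adj n x y \<Longrightarrow> SG_adj n y x"
  by (auto simp: SG_adj_def)

lemma U1_inv: "U1_connection n \<omega> \<Longrightarrow> SG_adj n x y \<Longrightarrow> \<omega> y x = inverse (\<omega> x y) \<and> \<omega> x y \<noteq> 0"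
  unfolding U1_connection_def by (metis norm_zero zero_neq_one)

lemma cell_facts:
  fixes \<omega> :: conn
  assumes U: "U1_connection (Suc n) \<omega>" and p: "p \<in> SG_cells n"
    and up: "\<forall>p\<in>SG_cells (Suc n). up_holonomy \<omega> p = g"
    and down: "\<forall>q. is_down_triangle (Suc n) q \<longrightarrow> down_holonomy \<omega> q = h"
  defines "P0 \<equiv> emb p" and "P1 \<equiv> P1p p" and "P2 \<equiv> P2p p" and "X \<equiv> Xp p" and "Y \<equiv> Yp p" and "Z \<equiv> Zp p"
  shows "\<omega> Y X = inverse (\<omega> X Y)" "\<omega> Z Y = inverse (\<omega> Y Z)" "\<omega> X Z = inverse (\<omega> Z X)"
     "\<omega> X P0 = inverse (\<omega> P0 X)" "\<omega> P0 Z = inverse (\<omega> Z P0)" "\<omega> P1 X = inverse (\<omega> X P1)"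
     "\<omega> Y P1 = inverse (\<omega> P1 Y)" "\<omega> P2 Y = inverse (\<omega> Y P2)" "\<omega> Z P2 = inverse (\<omega> P2 Z)"
   and "\<omega> X Y \<noteq> 0" "\<omega> Y Z \<noteq> 0" "\<omega> Z X \<noteq> 0" "\<omega> P0 X \<noteq> 0" "\<omega> Z P0 \<noteq> 0" "\<omega> X P1 \<noteq> 0"
      "\<omega> P1 Y \<noteq> 0" "\<omega> Y P2 \<noteq> 0" "\<omega> P2 Z \<noteq> 0"
   and "\<omega> P0 X * \<omega> X Z * \<omega> Z P0 = g" "\<omega> X P1 * \<omega> P1 Y * \<omega> Y X = g" "\<omega> Z Y * \<omega> Y P2 * \<omega> P2 Z = g"
      "\<omega> X Y * \<omega> Y Z * \<omega> Z X = h"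
  using U1_inv[OF U adj_pairs(1)[OF p]] U1_inv[OF U adj_pairs(2)[OF p]] U1_inv[OF U adj_pairs(3)[OF p]]
    U1_inv[OF U adj_pairs(4)[OF p]] U1_inv[OF U adj_pairs(5)[OF p]] U1_inv[OF U adj_pairs(6)[OF p]]
    U1_inv[OF U adj_pairs(7)[OF p]] U1_inv[OF U adj_pairs(8)[OF p]] U1_inv[OF U adj_pairs(9)[OF p]]
    up children_cells[OF p] down[rule_format, OF down_tri[OF p]]
  unfolding P0_def P1_def P2_def X_def Y_def Z_def
  by (auto simp: hol_simps)

definition Mmat :: "nat \<Rightarrow> conn \<Rightarrow> real \<Rightarrow> vtx \<Rightarrow> vtx \<Rightarrow> complex" where
  "Mmat N \<omega> lam x y = mag_lap N \<omega> x y - (if x = y then complex_of_real lam else 0)"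

definition Kg :: "conn \<Rightarrow> complex \<Rightarrow> complex \<Rightarrow> vtx \<Rightarrow> vtx \<Rightarrow> complex" where
  "Kg W u d x y = (if half x = half y then Kloc W u d x y else 0)"

lemma schur_eq: "schur_compl N \<omega> lam x y = Mmat N \<omega> lam x y -
   (\<Sum>z\<in>SG_V N - SG_Vold N. \<Sum>w\<in>SG_V N - SG_Vold N.
      Mmat N \<omega> lam x z * mat_inv_on (SG_V N - SG_Vold N) (Mmat N \<omega> lam) z w * Mmat N \<omega> lam w y)"
  unfolding schur_compl_def Let_def Mmat_def[abs_def] by (rule refl)

lemma new_adj_block: "SG_adj (Suc n) x z \<Longrightarrow> x \<in> block p \<Longrightarrow> newpt z \<Longrightarrow> z \<in> block p"
  using adj_char new_six_block block_new block_half by metis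

lemma old_adj_block: "SG_adj (Suc n) (emb a) z \<Longrightarrow> z \<in> block p \<Longrightarrow> a \<in> cell_vertices p"
  using adj_char new_six_block block_new block_half emb_six by metis

lemma block_ud: "x \<in> block p \<Longrightarrow> z \<in> block p \<Longrightarrow> x \<noteq> z \<Longrightarrow> unit_diff x z"
  by (auto simp: block_def unit_diff_def pt_defs)

lemma block_six: "x \<in> block p \<Longrightarrow> x \<in> six p"
  by (auto simp: six_split)

lemma Mmat_in_block:
  assumes "p \<in> SG_cells n" "x \<in> block p" "z \<in> block p"
  shows "Mmat (Suc n) \<omega> lam x z = Mloc \<omega> (of_real (1 - lam)) x z"
proof (cases "x = z")
  case True then show ?thesis by (simp add: Mmat_def mag_lap_def Mloc_def)
next
  case False
  have "SG_adj (Suc n) x z" using adj_in[OF assms(1) block_six[OF assms(2)] block_six[OF assms(3)] False]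
    block_ud[OF assms(2,3) False] by blast
  moreover have "x \<notin> SG_V0 (Suc n)" using V0_new[of "Suc n" x] block_new[OF assms(2)] by auto
  ultimately show ?thesis using False by (simp add: Mmat_def mag_lap_def Mloc_def)
qed

lemma Mmat_out_block:
  assumes "x \<in> block p" "newpt z" "z \<notin> block p"
  shows "Mmat (Suc n) \<omega> lam x z = 0" "Mmat (Suc n) \<omega> lam z x = 0"
proof -
  have a1: "\<not> SG_adj (Suc n) x z" using new_adj_block assms by blast
  then have a2: "\<not> SG_adj (Suc n) z x" using adj_sym by blast
  have "x \<noteq> z" using assms by auto
  then show "Mmat (Suc n) \<omega> lam x z = 0" "Mmat (Suc n) \<omega> lam z x = 0"
    using a1 a2 by (auto simp: Mmat_def mag_lap_def)
qed

lemma cos_exp2: "complex_of_real (cos (2*pi*x)) = (exp (2 * of_real pi * \<i> * of_real x) + inverse (exp (2 * of_real pi * \<i> * of_real x)))/2"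
proof -
  have "complex_of_real (cos (2*pi*x)) = cos (complex_of_real (2*pi*x))" by (simp only: cos_of_real)
  also have "\<dots> = (exp (\<i> * complex_of_real (2*pi*x)) + exp (- (\<i> * complex_of_real (2*pi*x))))/2"
    by (rule cos_exp_eq)
  also have "\<i> * complex_of_real (2*pi*x) = 2 * of_real pi * \<i> * of_real x" by (simp add: algebra_simps)
  finally show ?thesis by (simp add: exp_minus)
qed

lemma D_eq: "complex_of_real (D_fun \<beta> lam) = (of_real (1-lam))^3 - 3 * of_real (1-lam) / 16
   - (exp (2 * of_real pi * \<i> * of_real \<beta>) + inverse (exp (2 * of_real pi * \<i> * of_real \<beta>)))/64"
proof -
  have "complex_of_real (D_fun \<beta> lam) = - (complex_of_real lam ^ 3) + 3 * complex_of_real lam ^ 2 - 45/16 * complex_of_real lam + 13/16 - 1/32 * complex_of_real (cos (2*pi*\<beta>))"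
    by (simp add: D_fun_def)
  also have "\<dots> = (of_real (1-lam))^3 - 3 * of_real (1-lam) / 16
   - (exp (2 * of_real pi * \<i> * of_real \<beta>) + inverse (exp (2 * of_real pi * \<i> * of_real \<beta>)))/64"
    unfolding cos_exp2 by (simp add: field_simps power3_eq_cube power2_eq_square)
  finally show ?thesis .
qed

lemma inv_K:
  fixes \<omega> :: conn
  assumes U: "U1_connection (Suc n) \<omega>"
    and up: "\<forall>p\<in>SG_cells (Suc n). up_holonomy \<omega> p = g"
    and down: "\<forall>q. is_down_triangle (Suc n) q \<longrightarrow> down_holonomy \<omega> q = h"
    and d: "d = u^3 - 3*u/16 - (h + inverse h)/64" and dnz: "d \<noteq> 0"
    and u: "u = of_real (1 - lam)"
  shows "inverse_on (SG_V (Suc n) - SG_Vold (Suc n)) (Mmat (Suc n) \<omega> lam) (Kg \<omega> u d)"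
  unfolding inverse_on_def
proof (intro ballI conjI)
  let ?I = "SG_V (Suc n) - SG_Vold (Suc n)"
  have I: "?I = (\<Union>p\<in>SG_cells n. block p)" by (rule I_Suc)
  have finI: "finite ?I" unfolding I using finite_cells by (auto simp: block_def)
  have newI: "z \<in> ?I \<Longrightarrow> newpt z" for z unfolding I using block_new by blast
  fix x y assume x: "x \<in> ?I" and y: "y \<in> ?I"
  obtain p where p: "p \<in> SG_cells n" "x \<in> block p" using x unfolding I by blast
  obtain q where q: "q \<in> SG_cells n" "y \<in> block q" using y unfolding I by blast
  have hx: "half x = p" using p block_half by blast
  have hy: "half y = q" using q block_half by blast
  have bI: "block p \<subseteq> ?I" using p unfolding I by blast
  note cf = cell_facts[OF U p(1) up down]
  note binv = block_inv[of \<omega> p d u h, OF cf(1-3) cf(10-12) d cf(22)[symmetric] dnz]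
  show "(\<Sum>z\<in>?I. Mmat (Suc n) \<omega> lam x z * Kg \<omega> u d z y) = (if x = y then 1 else 0)"
  proof -
    have "(\<Sum>z\<in>?I. Mmat (Suc n) \<omega> lam x z * Kg \<omega> u d z y) = (\<Sum>z\<in>block p. Mmat (Suc n) \<omega> lam x z * Kg \<omega> u d z y)"
      using Mmat_out_block(1)[OF p(2) newI] by (intro sum.mono_neutral_right[OF finI bI]) auto
    also have "\<dots> = (if x = y then 1 else 0)"
    proof (cases "q = p")
      case True
      have "(\<Sum>z\<in>block p. Mmat (Suc n) \<omega> lam x z * Kg \<omega> u d z y) = (\<Sum>z\<in>block p. Mloc \<omega> u x z * Kloc \<omega> u d z y)"
        using Mmat_in_block[OF p] True hy block_half u by (intro sum.cong) (auto simp: Kg_def)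
      then show ?thesis using binv p(2) q(2) True by auto
    next
      case False
      then have "x \<noteq> y" using hx hy by auto
      moreover have "Kg \<omega> u d z y = 0" if "z \<in> block p" for z
        using that block_half hy False by (auto simp: Kg_def)
      ultimately show ?thesis by simp
    qed
    finally show ?thesis .
  qed
  show "(\<Sum>z\<in>?I. Kg \<omega> u d x z * Mmat (Suc n) \<omega> lam z y) = (if x = y then 1 else 0)"
  proof -
    have "Kg \<omega> u d x z = 0" if zz: "z \<in> ?I - block p" for z
    proof -
      obtain r where "z \<in> block r" using zz unfolding I by blast
      then have "half z \<noteq> p" using zz block_half by auto
      then show ?thesis using hx by (simp add: Kg_def)
    qed
    then have "(\<Sum>z\<in>?I. Kg \<omega> u d x z * Mmat (Suc n) \<omega> lam z y) = (\<Sum>z\<in>block p. Kg \<omega> u d x z * Mmat (Suc n) \<omega> lam z y)"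
      by (intro sum.mono_neutral_right[OF finI bI]) auto
    also have "\<dots> = (if x = y then 1 else 0)"
    proof (cases "q = p")
      case True
      have "(\<Sum>z\<in>block p. Kg \<omega> u d x z * Mmat (Suc n) \<omega> lam z y) = (\<Sum>z\<in>block p. Kloc \<omega> u d x z * Mloc \<omega> u z y)"
        using Mmat_in_block[OF p(1)] q(2) True hx block_half u by (intro sum.cong) (auto simp: Kg_def)
      then show ?thesis using binv p(2) q(2) True by auto
    next
      case False
      then have "x \<noteq> y" using hx hy by auto
      moreover have "Mmat (Suc n) \<omega> lam z y = 0" if "z \<in> block p" for z
      proof -
        have "y \<notin> block p" using False q(2) block_half hy by blast
        then show ?thesis using Mmat_out_block(1)[OF that newI[OF y]] by simp
      qed
      ultimately show ?thesis by simp
    qed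
    finally show ?thesis .
  qed
qed

lemma inv_unique:
  assumes fin: "finite S" and K: "inverse_on S M K" and x: "x \<in> S" and y: "y \<in> S"
  shows "mat_inv_on S M x y = K x y"
proof -
  define K' where "K' = mat_inv_on S M"
  have K': "inverse_on S M K'" unfolding K'_def mat_inv_on_def using K by (metis someI)
  have "K' x y = (\<Sum>z\<in>S. if z = y then K' x z else 0)" using y fin by simp
  also have "\<dots> = (\<Sum>z\<in>S. K' x z * (\<Sum>w\<in>S. M z w * K w y))"
    using K y unfolding inverse_on_def by (intro sum.cong) auto
  also have "\<dots> = (\<Sum>z\<in>S. \<Sum>w\<in>S. K' x z * M z w * K w y)"
    by (simp add: sum_distrib_left mult.assoc)
  also have "\<dots> = (\<Sum>w\<in>S. \<Sum>z\<in>S. K' x z * M z w * K w y)"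
    by (rule sum.swap)
  also have "\<dots> = (\<Sum>w\<in>S. (\<Sum>z\<in>S. K' x z * M z w) * K w y)"
    by (simp add: sum_distrib_right)
  also have "\<dots> = (\<Sum>w\<in>S. if x = w then K w y else 0)"
    using K' x unfolding inverse_on_def by (intro sum.cong) auto
  also have "\<dots> = K x y" using x fin by simp
  finally show ?thesis by (simp add: K'_def)
qed

lemma cv_unique: "a \<noteq> b \<Longrightarrow> a \<in> cell_vertices p \<Longrightarrow> b \<in> cell_vertices p \<Longrightarrow>
    a \<in> cell_vertices q \<Longrightarrow> b \<in> cell_vertices q \<Longrightarrow> p = q"
  by (cases p; cases q; auto simp: cell_vertices_def)

lemma emb_not_adj: "a \<noteq> b \<Longrightarrow> \<not> SG_adj N (emb a) (emb b)"
proof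
  assume "SG_adj N (emb a) (emb b)"
  then have "unit_diff (emb a) (emb b)" by (rule adj_unit)
  then show False by (auto simp: unit_diff_def emb_def) presburger+
qed

definition cA :: "nat \<Rightarrow> vtx \<Rightarrow> complex" where
  "cA n a = (if a \<in> SG_V0 n then - (1/2) else - (1/4))"

lemma M_old_new:
  assumes p: "p \<in> SG_cells n" and z: "z \<in> block p"
  shows "Mmat (Suc n) \<omega> lam (emb a) z = (if a \<in> cell_vertices p then cA n a * (if unit_diff (emb a) z then \<omega> (emb a) z else 0) else 0)"
    "Mmat (Suc n) \<omega> lam z (emb a) = (if a \<in> cell_vertices p then - (1/4) * (if unit_diff z (emb a) then \<omega> z (emb a) else 0) else 0)"
proof -
  have ne: "emb a \<noteq> z" using block_new[OF z] emb_not_new by metis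
  have zn: "z \<notin> SG_V0 (Suc n)" using V0_new[of "Suc n" z] block_new[OF z] by auto
  show "Mmat (Suc n) \<omega> lam (emb a) z = (if a \<in> cell_vertices p then cA n a * (if unit_diff (emb a) z then \<omega> (emb a) z else 0) else 0)"
  proof (cases "a \<in> cell_vertices p")
    case True
    then have "SG_adj (Suc n) (emb a) z \<longleftrightarrow> unit_diff (emb a) z"
      using adj_unit adj_in[OF p _ block_six[OF z] ne] emb_six by blast
    then show ?thesis using True ne by (simp add: Mmat_def mag_lap_def cA_def emb_V0)
  next
    case False
    then have "\<not> SG_adj (Suc n) (emb a) z" using old_adj_block z by blast
    then show ?thesis using False ne by (simp add: Mmat_def mag_lap_def)
  qed
  show "Mmat (Suc n) \<omega> lam z (emb a) = (if a \<in> cell_vertices p then - (1/4) * (if unit_diff z (emb a) then \<omega> z (emb a) else 0) else 0)"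
  proof (cases "a \<in> cell_vertices p")
    case True
    then have "SG_adj (Suc n) z (emb a) \<longleftrightarrow> unit_diff z (emb a)"
      using adj_unit adj_in[OF p block_six[OF z] _ ne[symmetric]] emb_six by blast
    then show ?thesis using True ne zn by (simp add: Mmat_def mag_lap_def)
  next
    case False
    then have "\<not> SG_adj (Suc n) z (emb a)" using old_adj_block z adj_sym by blast
    then show ?thesis using False ne by (simp add: Mmat_def mag_lap_def)
  qed
qed


lemma block_disj: "p \<noteq> q \<Longrightarrow> block p \<inter> block q = {}"
  using block_half by blast

lemma sum_I: "(\<Sum>z\<in>SG_V (Suc n) - SG_Vold (Suc n). G z) = (\<Sum>p\<in>SG_cells n. \<Sum>z\<in>block p. G z)"
  unfolding I_Suc
  apply (rule sum.UNION_disjoint[OF finite_cells])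
   apply (simp add: block_def)
  using block_disj by blast

lemma card_pair:
  assumes "a \<noteq> b"
  shows "card {p \<in> SG_cells n. a \<in> cell_vertices p \<and> b \<in> cell_vertices p} = (if SG_adj n a b then 1 else 0)"
proof (cases "SG_adj n a b")
  case True
  then obtain p0 where p0: "p0 \<in> SG_cells n" "a \<in> cell_vertices p0" "b \<in> cell_vertices p0"
    by (auto simp: SG_adj_def)
  then have "{p \<in> SG_cells n. a \<in> cell_vertices p \<and> b \<in> cell_vertices p} = {p0}"
    using cv_unique[OF assms] by blast
  then show ?thesis using True by simp
next
  case False
  then have "{p \<in> SG_cells n. a \<in> cell_vertices p \<and> b \<in> cell_vertices p} = {}"
    using assms False unfolding SG_adj_def by blast
  then show ?thesis using False by (simp only: card.empty) simp
qed

lemma key: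
  fixes \<omega> :: conn and n :: nat
  assumes U: "U1_connection (Suc n) \<omega>"
    and up: "\<forall>p\<in>SG_cells (Suc n). up_holonomy \<omega> p = g"
    and down: "\<forall>q. is_down_triangle (Suc n) q \<longrightarrow> down_holonomy \<omega> q = h"
    and d: "d = u^3 - 3*u/16 - (h + inverse h)/64" and dnz: "d \<noteq> 0"
    and u: "u = of_real (1 - lam)"
    and a: "a \<in> SG_V n" and b: "b \<in> SG_V n"
  shows "schur_compl (Suc n) \<omega> lam (emb a) (emb b) =
    (if a = b then u - QC u g h / (8*d)
     else if SG_adj n a b then cA n a * (if ccw_edge a b then PsiC u g h else PsiC u (inverse g) (inverse h)) / (4*d)
        * \<omega> (emb a) (mid a b) * \<omega> (mid a b) (emb b)
     else 0)"
proof -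
  let ?I = "SG_V (Suc n) - SG_Vold (Suc n)"
  let ?M = "Mmat (Suc n) \<omega> lam"
  have I: "?I = (\<Union>p\<in>SG_cells n. block p)" by (rule I_Suc)
  have finI: "finite ?I" unfolding I using finite_cells by (auto simp: block_def)
  have Kinv: "inverse_on ?I ?M (Kg \<omega> u d)" by (rule inv_K[OF U up down d dnz u])
  define F where "F z w = ?M (emb a) z * Kg \<omega> u d z w * ?M w (emb b)" for z w
  define L where "L = (if a = b then QC u g h / d
        else if ccw_edge a b then PsiC u g h / d * \<omega> (emb a) (mid a b) * \<omega> (mid a b) (emb b)
        else PsiC u (inverse g) (inverse h) / d * \<omega> (emb a) (mid a b) * \<omega> (mid a b) (emb b))"
  have S1: "(\<Sum>z\<in>?I. \<Sum>w\<in>?I. ?M (emb a) z * mat_inv_on ?I ?M z w * ?M w (emb b)) = (\<Sum>z\<in>?I. \<Sum>w\<in>?I. F z w)"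
    using inv_unique[OF finI Kinv] by (intro sum.cong) (auto simp: F_def)
  also have "\<dots> = (\<Sum>p\<in>SG_cells n. \<Sum>z\<in>block p. \<Sum>w\<in>?I. F z w)" by (rule sum_I)
  also have "\<dots> = (\<Sum>p\<in>SG_cells n. \<Sum>z\<in>block p. \<Sum>w\<in>block p. F z w)"
  proof (rule sum.cong[OF refl], rule sum.cong[OF refl])
    fix p z assume p: "p \<in> SG_cells n" and z: "z \<in> block p"
    have bI: "block p \<subseteq> ?I" using p unfolding I by blast
    have "F z w = 0" if w: "w \<in> ?I - block p" for w
    proof -
      obtain r where "w \<in> block r" using w unfolding I by blast
      then have "half w \<noteq> p" using w block_half by auto
      then show ?thesis using block_half[OF z] by (simp add: F_def Kg_def)
    qed
    then show "(\<Sum>w\<in>?I. F z w) = (\<Sum>w\<in>block p. F z w)"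
      by (intro sum.mono_neutral_right[OF finI bI]) auto
  qed
  also have "\<dots> = (\<Sum>p\<in>SG_cells n. if a \<in> cell_vertices p \<and> b \<in> cell_vertices p then cA n a * (- (1/4)) * L else 0)"
  proof (rule sum.cong[OF refl])
    fix p assume p: "p \<in> SG_cells n"
    show "(\<Sum>z\<in>block p. \<Sum>w\<in>block p. F z w) = (if a \<in> cell_vertices p \<and> b \<in> cell_vertices p then cA n a * (- (1/4)) * L else 0)"
    proof (cases "a \<in> cell_vertices p \<and> b \<in> cell_vertices p")
      case True
      note cf = cell_facts[OF U p up down]
      have loc: "(\<Sum>z\<in>block p. \<Sum>w\<in>block p. (if unit_diff (emb a) z then \<omega> (emb a) z else 0) * Kloc \<omega> u d z w
          * (if unit_diff w (emb b) then \<omega> w (emb b) else 0)) = L"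
        using loc_lemma[of \<omega> p g h d u, OF cf dnz] True unfolding L_def by blast
      have "F z w = cA n a * (- (1/4)) * ((if unit_diff (emb a) z then \<omega> (emb a) z else 0) * Kloc \<omega> u d z w
          * (if unit_diff w (emb b) then \<omega> w (emb b) else 0))" if "z \<in> block p" "w \<in> block p" for z w
        using M_old_new[OF p that(1), of \<omega> lam a] M_old_new[OF p that(2), of \<omega> lam b] True
          block_half[OF that(1)] block_half[OF that(2)]
        by (simp add: F_def Kg_def)
      then have "(\<Sum>z\<in>block p. \<Sum>w\<in>block p. F z w) = (\<Sum>z\<in>block p. \<Sum>w\<in>block p. cA n a * (- (1/4)) * ((if unit_diff (emb a) z then \<omega> (emb a) z else 0) * Kloc \<omega> u d z w
          * (if unit_diff w (emb b) then \<omega> w (emb b) else 0)))"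
        by (intro sum.cong refl) auto
      also have "\<dots> = cA n a * (- (1/4)) * L" unfolding loc[symmetric] by (simp add: sum_distrib_left)
      finally show ?thesis using True by simp
    next
      case False
      have "F z w = 0" if "z \<in> block p" "w \<in> block p" for z w
        using M_old_new[OF p that(1), of \<omega> lam a] M_old_new[OF p that(2), of \<omega> lam b] False
        by (auto simp: F_def)
      then have "(\<Sum>z\<in>block p. \<Sum>w\<in>block p. F z w) = 0" by simp
      then show ?thesis using False by (simp only: if_False)
    qed
  qed
  also have "\<dots> = of_nat (card {p \<in> SG_cells n. a \<in> cell_vertices p \<and> b \<in> cell_vertices p}) * (cA n a * (- (1/4)) * L)"
    using finite_cells by (simp add: sum.If_cases Int_def)
  finally have T: "(\<Sum>z\<in>?I. \<Sum>w\<in>?I. ?M (emb a) z * mat_inv_on ?I ?M z w * ?M w (emb b)) =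
     of_nat (card {p \<in> SG_cells n. a \<in> cell_vertices p \<and> b \<in> cell_vertices p}) * (cA n a * (- (1/4)) * L)" .
  show ?thesis
  proof (cases "a = b")
    case True
    have "?M (emb a) (emb b) = u" using True u by (simp add: Mmat_def mag_lap_def)
    then show ?thesis using True count_cells[OF a] unfolding schur_eq T L_def
      by (simp add: cA_def field_simps)
  next
    case False
    have "?M (emb a) (emb b) = 0" using False emb_not_adj[OF False] emb_inj by (simp add: Mmat_def mag_lap_def)
    then show ?thesis using False card_pair[OF False, of n] unfolding schur_eq T L_def
      by (simp add: field_simps)
  qed
qed


lemma exp_facts:
  fixes \<alpha> \<beta> :: real
  defines "g \<equiv> exp (2 * of_real pi * \<i> * of_real \<alpha>)" and "h \<equiv> exp (2 * of_real pi * \<i> * of_real \<beta>)"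
  shows "exp (- 2 * of_real pi * \<i> * of_real \<alpha>) = inverse g"
    "exp (- 2 * of_real pi * \<i> * of_real (2*\<alpha> + \<beta>)) = inverse (g^2 * h)"
    "exp (- 4 * of_real pi * \<i> * of_real \<alpha>) = inverse (g^2)"
    "exp (- 2 * of_real pi * \<i> * of_real (\<alpha> + \<beta>)) = inverse (g * h)"
    "exp (2 * of_real pi * \<i> * of_real (\<alpha> + \<beta>)) = g * h"
    "cnj g = inverse g" "cnj h = inverse h"
proof -
  let ?a = "2 * of_real pi * \<i> * (of_real \<alpha> :: complex)"
  let ?b = "2 * of_real pi * \<i> * (of_real \<beta> :: complex)"
  have 1: "- 2 * of_real pi * \<i> * of_real \<alpha> = - ?a" by simp
  have 2: "- 2 * of_real pi * \<i> * of_real (2*\<alpha> + \<beta>) = - (?a + ?a + ?b)" by (simp add: algebra_simps)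
  have 3: "- 4 * of_real pi * \<i> * of_real \<alpha> = - (?a + ?a)" by (simp add: algebra_simps)
  have 4: "- 2 * of_real pi * \<i> * of_real (\<alpha> + \<beta>) = - (?a + ?b)" by (simp add: algebra_simps)
  have 5: "2 * of_real pi * \<i> * of_real (\<alpha> + \<beta>) = ?a + ?b" by (simp add: algebra_simps)
  show "exp (- 2 * of_real pi * \<i> * of_real \<alpha>) = inverse g" unfolding 1 g_def by (simp add: exp_minus)
  show "exp (- 2 * of_real pi * \<i> * of_real (2*\<alpha> + \<beta>)) = inverse (g^2 * h)"
    unfolding 2 g_def h_def by (simp only: exp_minus exp_add) (simp add: power2_eq_square)
  show "exp (- 4 * of_real pi * \<i> * of_real \<alpha>) = inverse (g^2)"
    unfolding 3 g_def by (simp only: exp_minus exp_add) (simp add: power2_eq_square)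
  show "exp (- 2 * of_real pi * \<i> * of_real (\<alpha> + \<beta>)) = inverse (g * h)"
    unfolding 4 g_def h_def by (simp only: exp_minus exp_add)
  show "exp (2 * of_real pi * \<i> * of_real (\<alpha> + \<beta>)) = g * h"
    unfolding 5 g_def h_def by (simp only: exp_add)
  show "cnj g = inverse g" unfolding g_def by (simp add: exp_cnj exp_minus[symmetric])
  show "cnj h = inverse h" unfolding h_def by (simp add: exp_cnj exp_minus[symmetric])
qed

lemma Psi_eq:
  "PsiC (of_real (1 - lam)) (exp (2 * of_real pi * \<i> * of_real \<alpha>)) (exp (2 * of_real pi * \<i> * of_real \<beta>)) = Psi_fun \<alpha> \<beta> lam"
  apply (simp only: Psi_fun_def PsiC_def exp_facts(2))
  apply (simp only: exp_facts(1,3,4))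
  apply (simp add: distrib_left exp_add)
  done

lemma Psi_cnj:
  "PsiC (of_real (1 - lam)) (inverse (exp (2 * of_real pi * \<i> * of_real \<alpha>))) (inverse (exp (2 * of_real pi * \<i> * of_real \<beta>))) = cnj (Psi_fun \<alpha> \<beta> lam)"
proof -
  have "cnj (Psi_fun \<alpha> \<beta> lam) = cnj (PsiC (of_real (1 - lam)) (exp (2 * of_real pi * \<i> * of_real \<alpha>)) (exp (2 * of_real pi * \<i> * of_real \<beta>)))"
    by (simp only: Psi_eq)
  also have "\<dots> = PsiC (of_real (1 - lam)) (inverse (exp (2 * of_real pi * \<i> * of_real \<alpha>))) (inverse (exp (2 * of_real pi * \<i> * of_real \<beta>)))"
    unfolding PsiC_def by (simp add: exp_facts(6,7))
  finally show ?thesis by simp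
qed

lemma QC_eq:
  "QC (of_real (1 - lam)) (exp (2 * of_real pi * \<i> * of_real \<alpha>)) (exp (2 * of_real pi * \<i> * of_real \<beta>)) = of_real (A_fun \<alpha> \<beta> lam) / 8"
proof -
  define g where "g = exp (2 * of_real pi * \<i> * of_real \<alpha>)"
  define h where "h = exp (2 * of_real pi * \<i> * of_real \<beta>)"
  have gnz: "g \<noteq> 0" and hnz: "h \<noteq> 0" by (simp_all add: g_def h_def)
  have c1: "complex_of_real (cos (2*pi*\<alpha>)) = (g + inverse g)/2" unfolding g_def by (rule cos_exp2)
  have c2: "complex_of_real (cos (2*pi*(\<alpha>+\<beta>))) = (g*h + inverse (g*h))/2"
    unfolding g_def h_def exp_facts(5)[symmetric] by (rule cos_exp2)
  have "complex_of_real (A_fun \<alpha> \<beta> lam) = 16 * complex_of_real lam ^ 2 - (32 + 4 * complex_of_real (cos (2*pi*\<alpha>))) * complex_of_real lam + 15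
     + 4 * complex_of_real (cos (2*pi*\<alpha>)) + complex_of_real (cos (2*pi*(\<alpha> + \<beta>)))"
    by (simp add: A_fun_def)
  also have "\<dots> = 16 * complex_of_real lam ^ 2 - (32 + 4 * ((g + inverse g)/2)) * complex_of_real lam + 15
     + 4 * ((g + inverse g)/2) + (g*h + inverse (g*h))/2"
    by (simp only: c1 c2)
  finally have A: "complex_of_real (A_fun \<alpha> \<beta> lam) = 16 * complex_of_real lam ^ 2 - (32 + 4 * ((g + inverse g)/2)) * complex_of_real lam + 15
     + 4 * ((g + inverse g)/2) + (g*h + inverse (g*h))/2" .
  show ?thesis unfolding g_def[symmetric] h_def[symmetric] A QC_def
    using gnz hnz by (simp add: field_simps power2_eq_square)
qed

lemma exp_theta:
  fixes P :: complex
  assumes "P \<noteq> 0"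
  defines "\<theta> \<equiv> arg02 P / (2 * pi)"
  shows "exp (2 * of_real pi * \<i> * of_real \<theta>) = P / of_real (cmod P)"
    "exp (- 2 * of_real pi * \<i> * of_real \<theta>) = cnj P / of_real (cmod P)"
proof -
  have t: "2 * of_real pi * \<i> * complex_of_real \<theta> = \<i> * of_real (arg02 P)"
    unfolding \<theta>_def by (simp add: field_simps)
  have c: "cis (arg02 P) = cis (Arg P)"
    by (simp add: arg02_def cis_mult[symmetric])
  have e: "exp (2 * of_real pi * \<i> * of_real \<theta>) = cis (Arg P)"
    unfolding t cis_conv_exp[symmetric] c ..
  then show "exp (2 * of_real pi * \<i> * of_real \<theta>) = P / of_real (cmod P)"
    using assms(1) by (simp add: cis_Arg sgn_eq)
  have "exp (- 2 * of_real pi * \<i> * of_real \<theta>) = inverse (exp (2 * of_real pi * \<i> * of_real \<theta>))"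
    by (simp add: exp_minus[symmetric])
  also have "\<dots> = cnj (cis (Arg P))" unfolding e by (simp add: cis_cnj)
  also have "\<dots> = cnj P / of_real (cmod P)" using assms(1) by (simp add: cis_Arg sgn_eq)
  finally show "exp (- 2 * of_real pi * \<i> * of_real \<theta>) = cnj P / of_real (cmod P)" .
qed

theorem corollary3p2:
  fixes N :: nat and \<alpha> \<beta> lam :: real and \<omega> :: conn
  assumes "N \<ge> 1"
    and "U1_connection N \<omega>"
    and "\<forall>p\<in>SG_cells N. up_holonomy \<omega> p = exp (2 * of_real pi * \<i> * of_real \<alpha>)"
    and "\<forall>q. is_down_triangle N q \<longrightarrow> down_holonomy \<omega> q = exp (2 * of_real pi * \<i> * of_real \<beta>)"
    and "D_fun \<beta> lam \<noteq> 0"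
    and "Psi_fun \<alpha> \<beta> lam \<noteq> 0"
  shows
    "((\<forall>t::real. Im (Psi_fun \<alpha> \<beta> t) = 0) \<longrightarrow>
       (let \<phi> = Psi_fun \<alpha> \<beta> lam / (4 * of_real (D_fun \<beta> lam));
            R = 1 + of_real (A_fun \<alpha> \<beta> lam - 64 * D_fun \<beta> lam * (1 - lam)) / (16 * Psi_fun \<alpha> \<beta> lam)
        in \<forall>a\<in>SG_V (N - 1). \<forall>b\<in>SG_V (N - 1).
             schur_compl N \<omega> lam (emb a) (emb b)
               = \<phi> * (mag_lap (N - 1) (Omega \<omega> 0) a b - (if a = b then R else 0))))
     \<and>
     (\<not> (\<forall>t::real. Im (Psi_fun \<alpha> \<beta> t) = 0) \<longrightarrow>
       (let \<phi> = cmod (Psi_fun \<alpha> \<beta> lam) / (4 * D_fun \<beta> lam);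
            R = 1 + (A_fun \<alpha> \<beta> lam - 64 * D_fun \<beta> lam * (1 - lam)) / (16 * cmod (Psi_fun \<alpha> \<beta> lam));
            \<theta> = arg02 (Psi_fun \<alpha> \<beta> lam) / (2 * pi)
        in \<forall>a\<in>SG_V (N - 1). \<forall>b\<in>SG_V (N - 1).
             schur_compl N \<omega> lam (emb a) (emb b)
               = of_real \<phi> * (mag_lap (N - 1) (Omega \<omega> \<theta>) a b - (if a = b then of_real R else 0))))"
proof -
  obtain n where N: "N = Suc n" using assms(1) by (cases N) auto
  define g where "g = exp (2 * of_real pi * \<i> * of_real \<alpha>)"
  define h where "h = exp (2 * of_real pi * \<i> * of_real \<beta>)"
  define u where "u = (of_real (1 - lam) :: complex)"
  define d where "d = complex_of_real (D_fun \<beta> lam)"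
  define P where "P = Psi_fun \<alpha> \<beta> lam"
  have dD: "d = u^3 - 3*u/16 - (h + inverse h)/64" unfolding d_def u_def h_def by (rule D_eq)
  have dnz: "d \<noteq> 0" using assms(5) by (simp add: d_def)
  have Pnz: "P \<noteq> 0" using assms(6) by (simp add: P_def)
  have u': "u = 1 - of_real lam" by (simp add: u_def)
  have U: "U1_connection (Suc n) \<omega>" using assms(2) N by simp
  have up: "\<forall>p\<in>SG_cells (Suc n). up_holonomy \<omega> p = g" using assms(3) N g_def by simp
  have down: "\<forall>q. is_down_triangle (Suc n) q \<longrightarrow> down_holonomy \<omega> q = h" using assms(4) N h_def by simp
  have QC: "QC u g h = of_real (A_fun \<alpha> \<beta> lam)/8" unfolding u_def g_def h_def by (rule QC_eq)
  have PP: "PsiC u g h = P" unfolding u_def g_def h_def P_def by (rule Psi_eq)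
  have Pc: "PsiC u (inverse g) (inverse h) = cnj P" unfolding u_def g_def h_def P_def by (rule Psi_cnj)
  have K: "schur_compl N \<omega> lam (emb a) (emb b) =
    (if a = b then u - of_real (A_fun \<alpha> \<beta> lam) / (64*d)
     else if SG_adj n a b then cA n a * (if ccw_edge a b then P else cnj P) / (4*d)
        * \<omega> (emb a) (mid a b) * \<omega> (mid a b) (emb b)
     else 0)" if "a \<in> SG_V n" "b \<in> SG_V n" for a b
    using key[OF U up down dD dnz u_def that] N by (simp add: QC PP Pc)
  have n1: "N - 1 = n" using N by simp
  have MLap: "mag_lap n W a b = (if a = b then 1 else if SG_adj n a b then cA n a * W a b else 0)" for W a b
    by (simp add: mag_lap_def cA_def)
  have Om: "Omega \<omega> \<theta> a b = \<omega> (emb a) (mid a b) * \<omega> (mid a b) (emb b) *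
      (if ccw_edge a b then exp (2 * of_real pi * \<i> * of_real \<theta>) else exp (- 2 * of_real pi * \<i> * of_real \<theta>))" for \<theta> a b
    by (simp add: Omega_def Let_def mid_def)
  show ?thesis
  proof (intro conjI impI)
    assume H: "\<forall>t::real. Im (Psi_fun \<alpha> \<beta> t) = 0"
    have cP: "cnj P = P" using H by (simp add: P_def complex_eq_iff)
    show "let \<phi> = Psi_fun \<alpha> \<beta> lam / (4 * of_real (D_fun \<beta> lam));
            R = 1 + of_real (A_fun \<alpha> \<beta> lam - 64 * D_fun \<beta> lam * (1 - lam)) / (16 * Psi_fun \<alpha> \<beta> lam)
        in \<forall>a\<in>SG_V (N - 1). \<forall>b\<in>SG_V (N - 1).
             schur_compl N \<omega> lam (emb a) (emb b)
               = \<phi> * (mag_lap (N - 1) (Omega \<omega> 0) a b - (if a = b then R else 0))"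
      unfolding Let_def n1 P_def[symmetric] d_def[symmetric]
    proof (intro ballI)
      fix a b assume a: "a \<in> SG_V n" and b: "b \<in> SG_V n"
      show "schur_compl N \<omega> lam (emb a) (emb b) = P / (4 * d) *
         (mag_lap n (Omega \<omega> 0) a b - (if a = b then 1 + complex_of_real (A_fun \<alpha> \<beta> lam - 64 * D_fun \<beta> lam * (1 - lam)) / (16 * P) else 0))"
        unfolding K[OF a b] MLap Om
        using Pnz dnz cP by (simp add: d_def[symmetric] u' field_simps)
    qed
  next
    assume H: "\<not> (\<forall>t::real. Im (Psi_fun \<alpha> \<beta> t) = 0)"
    have cm: "complex_of_real (cmod P) \<noteq> 0" using Pnz by simp
    note et = exp_theta[OF Pnz]
    show "let \<phi> = cmod (Psi_fun \<alpha> \<beta> lam) / (4 * D_fun \<beta> lam);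
            R = 1 + (A_fun \<alpha> \<beta> lam - 64 * D_fun \<beta> lam * (1 - lam)) / (16 * cmod (Psi_fun \<alpha> \<beta> lam));
            \<theta> = arg02 (Psi_fun \<alpha> \<beta> lam) / (2 * pi)
        in \<forall>a\<in>SG_V (N - 1). \<forall>b\<in>SG_V (N - 1).
             schur_compl N \<omega> lam (emb a) (emb b)
               = of_real \<phi> * (mag_lap (N - 1) (Omega \<omega> \<theta>) a b - (if a = b then of_real R else 0))"
      unfolding Let_def n1 P_def[symmetric]
    proof (intro ballI)
      fix a b assume a: "a \<in> SG_V n" and b: "b \<in> SG_V n"
      show "schur_compl N \<omega> lam (emb a) (emb b) = complex_of_real (cmod P / (4 * D_fun \<beta> lam)) *
         (mag_lap n (Omega \<omega> (arg02 P / (2 * pi))) a b - (if a = b then complex_of_real (1 + (A_fun \<alpha> \<beta> lam - 64 * D_fun \<beta> lam * (1 - lam)) / (16 * cmod P)) else 0))"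
        unfolding K[OF a b] MLap Om et
        using Pnz dnz cm by (simp add: d_def[symmetric] u' field_simps)
    qed
  qed
qed

end
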